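(* Let $K$ be an algebraically closed field, let $r\ge 3$, and let $f\in K[x_{ij}\mid i,j\in[m]]$ be a polynomial in the entries of the generic $m\times m$ matrix $x=(x_{ij})$ with the following properties: (1) $f$ vanishes on all matrices in $K^{m\times m}$ of rank $r$; (2) for every row index $i\in[m]$, $f$ admits an expansion $f=x_{i,j_1}f_1+\cdots+x_{i,j_{r+1}}f_{r+1}$ with $j_1<\cdots<j_{r+1}$, where each $f_l$ is a polynomial in the entries of the $([m]\setminus\{i\})\times([m]\setminus\{j_l\})$-submatrix $z$ of $x$ of the form: a scalar times a monomial times some $r\times r$-minor of $z$; (3) for every column index $j\in[m]$, $f$ admits an expansion $f=x_{i_1,j}g_1+\cdots+x_{i_{r+1},j}g_{r+1}$ with $i_1<\cdots<i_{r+1}$, where each $g_l$ is a polynomial in the entries of the $([m]\setminus\{i_l\})\times([m]\setminus\{j\})$-submatrix $z'$ of $x$ of the form: a scalar times a monomial times some $r\times r$-minor of $z'$. Then $m=r+1$ and $f$ is a scalar multiple of the $(r+1)\times(r+1)$-determinant of $x$. *)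

theory Defs
  imports "HOL-Library.Poly_Mapping" "HOL-Combinatorics.Permutations"
    "HOL-Computational_Algebra.Polynomial" "Jordan_Normal_Form.DL_Rank"
begin

text \<open>Multivariate polynomials in the variables x_ij (indexed by pairs of naturals):
  a monomial is a finitely supported exponent map, a polynomial is a
  finitely supported coefficient map on monomials (convolution product from Poly_Mapping).\<close>

type_synonym 'a mpoly = "((nat \<times> nat) \<Rightarrow>\<^sub>0 nat) \<Rightarrow>\<^sub>0 'a"

definition Var :: "nat \<Rightarrow> nat \<Rightarrow> 'a::comm_ring_1 mpoly" where
  "Var i j = Poly_Mapping.single (Poly_Mapping.single (i, j) 1) 1"

definition mterm :: "'a::comm_ring_1 \<Rightarrow> ((nat \<times> nat) \<Rightarrow>\<^sub>0 nat) \<Rightarrow> 'a mpoly" where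
  "mterm c e = Poly_Mapping.single e c"

definition const_mpoly :: "'a::comm_ring_1 \<Rightarrow> 'a mpoly" where
  "const_mpoly c = Poly_Mapping.single 0 c"

definition mvars :: "'a::zero mpoly \<Rightarrow> (nat \<times> nat) set" where
  "mvars p = (\<Union>e\<in>Poly_Mapping.keys p. Poly_Mapping.keys e)"

text \<open>the minor of the generic matrix with row set R and column set C (|R| = |C|),
  rows and columns taken in increasing order\<close>
definition minor_poly :: "nat set \<Rightarrow> nat set \<Rightarrow> 'a::comm_ring_1 mpoly" where
  "minor_poly R C =
     (let k = card R; rs = sorted_list_of_set R; cs = sorted_list_of_set C in
      \<Sum>p | p permutes {..<k}. of_int (sign p) * (\<Prod>l<k. Var (rs ! l) (cs ! (p l))))"

definition eval_mpoly :: "'a::comm_ring_1 mpoly \<Rightarrow> (nat \<Rightarrow> nat \<Rightarrow> 'a) \<Rightarrow> 'a" where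
  "eval_mpoly p A = (\<Sum>e\<in>Poly_Mapping.keys p. Poly_Mapping.lookup p e * (\<Prod>v\<in>Poly_Mapping.keys e. A (fst v) (snd v) ^ Poly_Mapping.lookup e v))"

definition scalar_mono_minor :: "nat set \<Rightarrow> nat set \<Rightarrow> nat \<Rightarrow> 'a::comm_ring_1 mpoly \<Rightarrow> bool" where
  "scalar_mono_minor Rz Cz r g \<longleftrightarrow>
     (\<exists>c e R C. Poly_Mapping.keys e \<subseteq> Rz \<times> Cz \<and> R \<subseteq> Rz \<and> C \<subseteq> Cz \<and> card R = r \<and> card C = r \<and>
        g = mterm c e * minor_poly R C)"

end

theory Submission
  imports Defs
begin

abbreviation "lk \<equiv> Poly_Mapping.lookup"
abbreviation "ks \<equiv> Poly_Mapping.keys"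
abbreviation "sng \<equiv> Poly_Mapping.single"

lemma lookup_single_mult:
  fixes k x :: "'b::cancel_comm_monoid_add" and c :: "'c::comm_semiring_1"
  shows "lk (sng k c * g) (k + x) = c * lk g x"
proof -
  have "lk (sng k c * g) (k + x) = (\<Sum>l. (c when k = l) * Sum_any (\<lambda>q. lk g q when k + x = l + q))"
    by (simp add: lookup_mult lookup_single)
  also have "\<dots> = (\<Sum>l. (c * Sum_any (\<lambda>q. lk g q when k + x = l + q)) when k = l)"
    by (simp add: when_mult)
  also have "\<dots> = c * Sum_any (\<lambda>q. lk g q when k + x = k + q)" by simp
  also have "Sum_any (\<lambda>q. lk g q when k + x = k + q) = Sum_any (\<lambda>q. lk g q when q = x)"
    by (rule Sum_any.cong) (auto simp: when_def)
  finally show ?thesis by simp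
qed

lemma keys_single_mult:
  fixes k :: "'b::cancel_comm_monoid_add" and c :: "'c::comm_semiring_1"
  assumes "\<mu> \<in> ks (sng k c * g)"
  shows "\<exists>\<nu>\<in>ks g. \<mu> = k + \<nu>"
  using keys_mult[of "sng k c" g] assms
  by (cases "c = 0") auto

lemma keys_add_nat: "ks (a + b :: 'x \<Rightarrow>\<^sub>0 nat) = ks a \<union> ks b"
  by (auto simp: in_keys_iff lookup_add)

lemma mvars_add: "mvars (p + q) \<subseteq> mvars p \<union> mvars q"
  unfolding mvars_def using keys_add[of p q] by blast

lemma mvars_mult: "mvars (p * q) \<subseteq> mvars p \<union> mvars q"
  unfolding mvars_def using keys_mult[of p q] by (fastforce simp: keys_add_nat)

lemma mvars_zero[simp]: "mvars 0 = {}" by (simp add: mvars_def)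
lemma mvars_one[simp]: "mvars 1 = {}" by (simp add: mvars_def)

lemma mvars_sum: "mvars (sum g A) \<subseteq> (\<Union>a\<in>A. mvars (g a))"
proof (induction A rule: infinite_finite_induct)
  case (insert x F)
  then show ?case using mvars_add[of "g x" "sum g F"] by auto
qed auto

lemma mvars_prod: "mvars (prod g A) \<subseteq> (\<Union>a\<in>A. mvars (g a))"
proof (induction A rule: infinite_finite_induct)
  case (insert x F)
  then show ?case using mvars_mult[of "g x" "prod g F"] by auto
qed auto

lemma mvars_Var: "mvars (Var i j) = {(i, j)}"
  by (simp add: mvars_def Var_def)

lemma mvars_of_int: "mvars (of_int c) = {}"
  by (auto simp: mvars_def in_keys_iff lookup_of_int)

lemma keys_mono_sub_mvars: "\<nu> \<in> ks g \<Longrightarrow> ks \<nu> \<subseteq> mvars g"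
  by (auto simp: mvars_def)

definition mmono :: "nat list \<Rightarrow> nat list \<Rightarrow> (nat \<Rightarrow> nat) \<Rightarrow> nat \<Rightarrow> (nat \<times> nat) \<Rightarrow>\<^sub>0 nat" where
  "mmono rs cs p k = (\<Sum>l<k. sng (rs ! l, cs ! (p l)) 1)"

lemma prod_Var:
  "(\<Prod>l\<in>A. Var (a l) (b l) :: 'a::comm_ring_1 mpoly) = sng (\<Sum>l\<in>A. sng (a l, b l) 1) 1"
proof (induction A rule: infinite_finite_induct)
  case (insert x F)
  then show ?case by (simp add: Var_def mult_single)
qed auto

lemma minor_poly_eq:
  "(minor_poly R C :: 'a::comm_ring_1 mpoly) =
    (\<Sum>p | p permutes {..<card R}. sng (mmono (sorted_list_of_set R) (sorted_list_of_set C) p (card R)) (of_int (sign p)))"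
proof -
  have "of_int (sign p) * sng x 1 = (sng x (of_int (sign p)) :: 'a mpoly)" for p x
  proof -
    have "of_int (sign p) * sng x 1 = sng 0 (of_int (sign p)) * (sng x 1 :: 'a mpoly)"
      by (simp only: single_of_int)
    also have "\<dots> = sng x (of_int (sign p))" by (simp only: mult_single add_0 mult_1_right)
    finally show ?thesis .
  qed
  note eq = this
  show ?thesis
    unfolding minor_poly_def Let_def mmono_def prod_Var
    by (intro sum.cong refl) (rule eq)
qed

lemma lookup_minor:
  "lk (minor_poly R C :: 'a::comm_ring_1 mpoly) \<nu> =
    (\<Sum>p | p permutes {..<card R}. (of_int (sign p) when \<nu> = mmono (sorted_list_of_set R) (sorted_list_of_set C) p (card R)))"
  unfolding minor_poly_eq lookup_sum lookup_single by (intro sum.cong refl) (auto simp: when_def)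

lemma lookup_mmono_in:
  assumes "distinct rs" "k \<le> length rs" "q < k"
  shows "lk (mmono rs cs p k) (rs ! q, b) = (if cs ! (p q) = b then 1 else 0)"
proof -
  have "lk (mmono rs cs p k) (rs ! q, b) = (\<Sum>l<k. (if l = q then (if cs ! (p q) = b then 1 else 0) else 0))"
    unfolding mmono_def lookup_sum lookup_single
    apply (rule sum.cong, simp)
    using assms by (auto simp: when_def nth_eq_iff_index_eq)
  then show ?thesis using assms by simp
qed

lemma lookup_mmono_out:
  assumes "a \<notin> (\<lambda>q. rs ! q) ` {..<k}"
  shows "lk (mmono rs cs p k) (a, b) = 0"
  unfolding mmono_def lookup_sum lookup_single
  using assms by (auto simp: when_def intro!: sum.neutral)

lemma mmono_inj:
  assumes "distinct rs" "k \<le> length rs" "distinct cs" "k \<le> length cs"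
    and p: "p permutes {..<k}" and p': "p' permutes {..<k}"
    and eq: "mmono rs cs p k = mmono rs cs p' k"
  shows "p = p'"
proof
  fix q
  show "p q = p' q"
  proof (cases "q < k")
    case True
    have "lk (mmono rs cs p k) (rs ! q, cs ! (p q)) = 1"
      using lookup_mmono_in[OF assms(1,2) True] by simp
    then have "lk (mmono rs cs p' k) (rs ! q, cs ! (p q)) = 1" using eq by simp
    then have "cs ! (p' q) = cs ! (p q)"
      using lookup_mmono_in[OF assms(1,2) True] by (simp split: if_splits)
    moreover have "p q < k" "p' q < k"
      using permutes_in_image[OF p, of q] permutes_in_image[OF p', of q] True by auto
    ultimately show ?thesis using assms(3,4) by (simp add: nth_eq_iff_index_eq)
  next
    case False
    then show ?thesis using p p' by (simp add: permutes_not_in)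
  qed
qed

lemma lookup_minor_mmono:
  assumes "finite R" "finite C" "card C = card R" "p0 permutes {..<card R}"
  shows "lk (minor_poly R C :: 'a::comm_ring_1 mpoly) (mmono (sorted_list_of_set R) (sorted_list_of_set C) p0 (card R))
       = of_int (sign p0)"
proof -
  let ?rs = "sorted_list_of_set R" and ?cs = "sorted_list_of_set C"
  have "(\<Sum>p | p permutes {..<card R}. ((of_int (sign p) :: 'a) when mmono ?rs ?cs p0 (card R) = mmono ?rs ?cs p (card R)))
      = (\<Sum>p | p permutes {..<card R}. (of_int (sign p) when p = p0))"
    apply (rule sum.cong, simp)
    apply (rule when_cong)
    using mmono_inj[of ?rs "card R" ?cs p0 _] assms by auto
  also have "\<dots> = of_int (sign p0)"
    using assms(4) by (simp add: when_def finite_permutations)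
  finally show ?thesis unfolding lookup_minor by simp
qed

lemma keys_minor:
  "\<nu> \<in> ks (minor_poly R C :: 'a::comm_ring_1 mpoly) \<Longrightarrow>
    \<exists>p. p permutes {..<card R} \<and> \<nu> = mmono (sorted_list_of_set R) (sorted_list_of_set C) p (card R)"
proof -
  assume "\<nu> \<in> ks (minor_poly R C :: 'a::comm_ring_1 mpoly)"
  then have "(\<Sum>p | p permutes {..<card R}. ((of_int (sign p) :: 'a) when \<nu> = mmono (sorted_list_of_set R) (sorted_list_of_set C) p (card R))) \<noteq> 0"
    unfolding in_keys_iff lookup_minor .
  then obtain p where "p \<in> {p. p permutes {..<card R}}"
    "((of_int (sign p) :: 'a) when \<nu> = mmono (sorted_list_of_set R) (sorted_list_of_set C) p (card R)) \<noteq> 0"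
    by (rule sum.not_neutral_contains_not_neutral)
  then show ?thesis by auto
qed

lemma mvars_minor:
  assumes "finite R" "finite C" "card C = card R"
  shows "mvars (minor_poly R C :: 'a::comm_ring_1 mpoly) \<subseteq> R \<times> C"
proof -
  let ?rs = "sorted_list_of_set R" and ?cs = "sorted_list_of_set C"
  have "mvars (minor_poly R C :: 'a mpoly) \<subseteq> (\<Union>p\<in>{p. p permutes {..<card R}}. \<Union>l\<in>{..<card R}. {(?rs ! l, ?cs ! (p l))})"
    unfolding minor_poly_def Let_def
    apply (rule order.trans[OF mvars_sum])
    apply (rule UN_mono, simp)
    apply (rule order.trans[OF mvars_mult])
    apply (simp add: mvars_of_int)
    apply (rule order.trans[OF mvars_prod])
    by (simp add: mvars_Var)
  also have "\<dots> \<subseteq> R \<times> C"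
  proof (clarsimp)
    fix p l assume p: "p permutes {..<card R}" and l: "l < card R"
    have "p l < card R" using permutes_in_image[OF p, of l] l by auto
    then show "?rs ! l \<in> R \<and> ?cs ! (p l) \<in> C"
      using l assms by (metis length_sorted_list_of_set nth_mem set_sorted_list_of_set)
  qed
  finally show ?thesis .
qed

lemma mvars_mterm: "mvars (mterm c e) \<subseteq> ks e"
  by (simp add: mvars_def mterm_def)


lemma mvars_smm:
  fixes g :: "'a::comm_ring_1 mpoly"
  assumes "scalar_mono_minor Rz Cz r g" "finite Rz" "finite Cz"
  shows "mvars g \<subseteq> Rz \<times> Cz"
proof -
  obtain c e R C where *: "ks e \<subseteq> Rz \<times> Cz" "R \<subseteq> Rz" "C \<subseteq> Cz" "card R = r" "card C = r"
    "g = mterm c e * minor_poly R C"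
    using assms(1) unfolding scalar_mono_minor_def by blast
  have "finite R" "finite C" using * assms finite_subset by auto
  then have "mvars (minor_poly R C :: 'a mpoly) \<subseteq> R \<times> C" using mvars_minor * by auto
  show ?thesis
  proof
    fix v assume "v \<in> mvars g"
    then obtain \<mu> where mu: "\<mu> \<in> ks g" "v \<in> ks \<mu>" by (auto simp: mvars_def)
    then obtain \<nu> where nu: "\<nu> \<in> ks (minor_poly R C :: 'a mpoly)" "\<mu> = e + \<nu>"
      using keys_single_mult[of \<mu> e c "minor_poly R C :: 'a mpoly"] *(6) by (auto simp: mterm_def)
    have "ks \<nu> \<subseteq> R \<times> C" using keys_mono_sub_mvars[OF nu(1)] \<open>mvars _ \<subseteq> R \<times> C\<close> by blast
    then show "v \<in> Rz \<times> Cz" using mu(2) nu(2) * by (auto simp: keys_add_nat)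
  qed
qed

definition pm :: "nat \<Rightarrow> (nat \<Rightarrow> nat) \<Rightarrow> (nat \<times> nat) \<Rightarrow>\<^sub>0 nat" where
  "pm m \<sigma> = (\<Sum>a<m. sng (a, \<sigma> a) 1)"

definition pmx :: "nat \<Rightarrow> nat \<Rightarrow> (nat \<Rightarrow> nat) \<Rightarrow> (nat \<times> nat) \<Rightarrow>\<^sub>0 nat" where
  "pmx m i \<sigma> = (\<Sum>a\<in>{..<m}-{i}. sng (a, \<sigma> a) 1)"

lemma lookup_pm: "lk (pm m \<sigma>) (a, b) = (if a < m \<and> \<sigma> a = b then 1 else 0)"
proof -
  have "lk (pm m \<sigma>) (a, b) = (\<Sum>a'<m. if a' = a then (if \<sigma> a = b then 1 else 0) else 0)"
    unfolding pm_def lookup_sum lookup_single by (rule sum.cong) (auto simp: when_def)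
  then show ?thesis by simp
qed

lemma lookup_pmx: "lk (pmx m i \<sigma>) (a, b) = (if a < m \<and> a \<noteq> i \<and> \<sigma> a = b then 1 else 0)"
proof -
  have "lk (pmx m i \<sigma>) (a, b) = (\<Sum>a'\<in>{..<m}-{i}. if a' = a then (if \<sigma> a = b then 1 else 0) else 0)"
    unfolding pmx_def lookup_sum lookup_single by (rule sum.cong) (auto simp: when_def)
  then show ?thesis by simp
qed

lemma pm_split: "i < m \<Longrightarrow> pm m \<sigma> = sng (i, \<sigma> i) 1 + pmx m i \<sigma>"
proof (rule poly_mapping_eqI)
  fix v :: "nat \<times> nat" assume i: "i < m"
  obtain a b where v: "v = (a, b)" by fastforce
  show "lk (pm m \<sigma>) v = lk (sng (i, \<sigma> i) 1 + pmx m i \<sigma>) v"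
    using i by (cases "a = i") (auto simp: v lookup_add lookup_pm lookup_pmx lookup_single when_def)
qed

lemma keys_sum_Var:
  fixes g :: "nat \<Rightarrow> 'a::comm_ring_1 mpoly"
  assumes "\<mu> \<in> ks (\<Sum>l\<in>L. Var (a l) (b l) * g l)"
  shows "\<exists>l\<in>L. \<exists>\<nu>\<in>ks (g l). \<mu> = sng (a l, b l) 1 + \<nu>"
proof -
  have "\<mu> \<in> (\<Union>l\<in>L. ks (Var (a l) (b l) * g l))"
    by (rule subsetD[OF keys_sum assms])
  then obtain l where l: "l \<in> L" "\<mu> \<in> ks (Var (a l) (b l) * g l)"
    by blast
  then show ?thesis using keys_single_mult[of \<mu>] unfolding Var_def by blast
qed

lemma lookup_Var_mult:
  fixes g :: "'a::comm_ring_1 mpoly"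
  shows "lk (Var i j * g) (sng (i, j) 1 + \<nu>) = lk g \<nu>"
  unfolding Var_def by (simp add: lookup_single_mult)

lemma lookup_Var_mult_zero:
  fixes g :: "'a::comm_ring_1 mpoly"
  assumes "lk \<mu> (i, j) = 0"
  shows "lk (Var i j * g) \<mu> = 0"
proof (rule ccontr)
  assume "lk (Var i j * g) \<mu> \<noteq> 0"
  then have "\<mu> \<in> ks (sng (sng (i, j) 1) 1 * g)" unfolding Var_def by (simp add: in_keys_iff)
  then obtain \<nu> where "\<mu> = sng (i, j) 1 + \<nu>" using keys_single_mult by blast
  then have "lk \<mu> (i, j) \<noteq> 0" by (simp add: lookup_add)
  then show False using assms by simp
qed

definition rowexp :: "'a::comm_ring_1 mpoly \<Rightarrow> nat \<Rightarrow> nat \<Rightarrow> nat \<Rightarrow> (nat \<Rightarrow> nat) \<Rightarrow> (nat \<Rightarrow> 'a mpoly) \<Rightarrow> bool" where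
  "rowexp f m r i js fs \<longleftrightarrow> strict_mono_on {..<r+1} js \<and> js ` {..<r+1} \<subseteq> {..<m} \<and>
           f = (\<Sum>l<r+1. Var i (js l) * fs l) \<and>
           (\<forall>l<r+1. scalar_mono_minor ({..<m} - {i}) ({..<m} - {js l}) r (fs l))"

definition colexp :: "'a::comm_ring_1 mpoly \<Rightarrow> nat \<Rightarrow> nat \<Rightarrow> nat \<Rightarrow> (nat \<Rightarrow> nat) \<Rightarrow> (nat \<Rightarrow> 'a mpoly) \<Rightarrow> bool" where
  "colexp f m r j is gs \<longleftrightarrow> strict_mono_on {..<r+1} is \<and> is ` {..<r+1} \<subseteq> {..<m} \<and>
           f = (\<Sum>l<r+1. Var (is l) j * gs l) \<and>
           (\<forall>l<r+1. scalar_mono_minor ({..<m} - {is l}) ({..<m} - {j}) r (gs l))"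

lemma row_slice:
  assumes "rowexp f m r i js fs" "\<mu> \<in> ks f"
  shows "\<exists>j. \<forall>b. lk \<mu> (i, b) = (if b = j then 1 else 0)"
proof -
  have f: "f = (\<Sum>l<r+1. Var i (js l) * fs l)" using assms(1) by (simp add: rowexp_def)
  have "\<mu> \<in> ks (\<Sum>l<r+1. Var i (js l) * fs l)" using assms(2) f by (simp only:)
  from keys_sum_Var[OF this] obtain l \<nu> where l: "l < r+1" "\<nu> \<in> ks (fs l)" "\<mu> = sng (i, js l) 1 + \<nu>"
    by blast
  have "mvars (fs l) \<subseteq> ({..<m} - {i}) \<times> ({..<m} - {js l})"
  proof -
    have "scalar_mono_minor ({..<m} - {i}) ({..<m} - {js l}) r (fs l)" using assms(1) l(1) by (simp add: rowexp_def)
    from mvars_smm[OF this] show ?thesis by simp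
  qed
  then have "ks \<nu> \<subseteq> ({..<m} - {i}) \<times> ({..<m} - {js l})" using keys_mono_sub_mvars[OF l(2)] by blast
  then have "lk \<nu> (i, b) = 0" for b by (auto simp: in_keys_iff)
  then show ?thesis using l(3) by (auto simp: lookup_add lookup_single when_def)
qed

lemma col_slice:
  assumes "colexp f m r j is gs" "\<mu> \<in> ks f"
  shows "\<exists>i. \<forall>a. lk \<mu> (a, j) = (if a = i then 1 else 0)"
proof -
  have f: "f = (\<Sum>l<r+1. Var (is l) j * gs l)" using assms(1) by (simp add: colexp_def)
  have "\<mu> \<in> ks (\<Sum>l<r+1. Var (is l) j * gs l)" using assms(2) f by (simp only:)
  from keys_sum_Var[OF this] obtain l \<nu> where l: "l < r+1" "\<nu> \<in> ks (gs l)" "\<mu> = sng (is l, j) 1 + \<nu>"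
    by blast
  have "mvars (gs l) \<subseteq> ({..<m} - {is l}) \<times> ({..<m} - {j})"
  proof -
    have "scalar_mono_minor ({..<m} - {is l}) ({..<m} - {j}) r (gs l)" using assms(1) l(1) by (simp add: colexp_def)
    from mvars_smm[OF this] show ?thesis by simp
  qed
  then have "ks \<nu> \<subseteq> ({..<m} - {is l}) \<times> ({..<m} - {j})" using keys_mono_sub_mvars[OF l(2)] by blast
  then have "lk \<nu> (a, j) = 0" for a by (auto simp: in_keys_iff)
  then show ?thesis using l(3) by (auto simp: lookup_add lookup_single when_def)
qed

lemma key_pm:
  assumes rows: "\<forall>i<m. \<exists>js fs. rowexp f m r i js fs"
    and cols: "\<forall>j<m. \<exists>is gs. colexp f m r j is gs"
    and mv: "mvars f \<subseteq> {..<m} \<times> {..<m}"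
    and mu: "\<mu> \<in> ks f"
  shows "\<exists>\<sigma>. \<sigma> permutes {..<m} \<and> \<mu> = pm m \<sigma>"
proof -
  have "\<forall>a. \<exists>j. a < m \<longrightarrow> (\<forall>b. lk \<mu> (a, b) = (if b = j then 1 else 0))"
    using rows row_slice[OF _ mu] by metis
  then obtain sf where sf: "\<And>a b. a < m \<Longrightarrow> lk \<mu> (a, b) = (if b = sf a then 1 else 0)"
    by metis
  have kb: "ks \<mu> \<subseteq> {..<m} \<times> {..<m}" using keys_mono_sub_mvars[OF mu] mv by blast
  define \<sigma> where "\<sigma> a = (if a < m then sf a else a)" for a
  have sm: "sf a < m" if "a < m" for a
  proof -
    have "(a, sf a) \<in> ks \<mu>" using sf[OF that, of "sf a"] by (simp add: in_keys_iff)
    then show ?thesis using kb by auto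
  qed
  have inj: "inj_on \<sigma> {..<m}"
  proof (rule inj_onI)
    fix a a' assume a: "a \<in> {..<m}" "a' \<in> {..<m}" "\<sigma> a = \<sigma> a'"
    then have "sf a = sf a'" by (simp add: \<sigma>_def)
    obtain i0 where i0: "\<forall>x. lk \<mu> (x, sf a) = (if x = i0 then 1 else 0)"
      using cols col_slice[OF _ mu] sm a(1) by (metis lessThan_iff)
    have "lk \<mu> (a, sf a) = 1" "lk \<mu> (a', sf a) = 1"
      using sf a \<open>sf a = sf a'\<close> by auto
    then show "a = a'" using i0 by (metis one_neq_zero)
  qed
  have img: "\<sigma> ` {..<m} \<subseteq> {..<m}" using sm by (auto simp: \<sigma>_def)
  have "\<sigma> ` {..<m} = {..<m}" using endo_inj_surj[OF _ img inj] by simp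
  then have "bij_betw \<sigma> {..<m} {..<m}" using inj by (simp add: bij_betw_def)
  then have perm: "\<sigma> permutes {..<m}"
    by (rule bij_imp_permutes) (simp add: \<sigma>_def)
  have "\<mu> = pm m \<sigma>"
  proof (rule poly_mapping_eqI)
    fix v :: "nat \<times> nat"
    obtain a b where v: "v = (a, b)" by fastforce
    show "lk \<mu> v = lk (pm m \<sigma>) v"
    proof (cases "a < m")
      case True
      then show ?thesis using sf[OF True, of b] by (auto simp: v lookup_pm \<sigma>_def)
    next
      case False
      then have "v \<notin> ks \<mu>" using kb v by auto
      then show ?thesis using False by (simp add: v lookup_pm in_keys_iff)
    qed
  qed
  then show ?thesis using perm by blast
qed

lemma rowexp_inj: "rowexp f m r i js fs \<Longrightarrow> inj_on js {..<r+1}"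
  unfolding rowexp_def using strict_mono_on_imp_inj_on by blast

lemma coef:
  assumes re: "rowexp f m r i js fs" and i: "i < m" and l0: "l0 < r+1" and s: "\<sigma> i = js l0"
  shows "lk f (pm m \<sigma>) = lk (fs l0) (pmx m i \<sigma>)"
proof -
  have f: "f = (\<Sum>l<r+1. Var i (js l) * fs l)" using re by (simp add: rowexp_def)
  have "lk f (pm m \<sigma>) = (\<Sum>l<r+1. lk (Var i (js l) * fs l) (pm m \<sigma>))"
    by (simp only: f lookup_sum)
  also have "\<dots> = (\<Sum>l<r+1. if l = l0 then lk (fs l0) (pmx m i \<sigma>) else 0)"
  proof (rule sum.cong, simp)
    fix l assume l: "l \<in> {..<r+1}"
    show "lk (Var i (js l) * fs l) (pm m \<sigma>) = (if l = l0 then lk (fs l0) (pmx m i \<sigma>) else 0)"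
    proof (cases "l = l0")
      case True
      then show ?thesis using pm_split[OF i, of \<sigma>] s lookup_Var_mult by simp
    next
      case False
      then have "js l \<noteq> js l0" using rowexp_inj[OF re] l l0 by (auto simp: inj_on_def)
      then have "lk (pm m \<sigma>) (i, js l) = 0" using s by (simp add: lookup_pm)
      then show ?thesis using False lookup_Var_mult_zero by simp
    qed
  qed
  also have "\<dots> = lk (fs l0) (pmx m i \<sigma>)" using l0 by simp
  finally show ?thesis .
qed

lemma key_row_idx:
  assumes re: "rowexp f m r i js fs" and "pm m \<sigma> \<in> ks f"
  shows "\<exists>l<r+1. js l = \<sigma> i"
proof -
  have f: "f = (\<Sum>l<r+1. Var i (js l) * fs l)" using re by (simp add: rowexp_def)
  have "pm m \<sigma> \<in> ks (\<Sum>l<r+1. Var i (js l) * fs l)" using assms(2) f by (simp only:)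
  from keys_sum_Var[OF this] obtain l \<nu> where l: "l < r+1" "pm m \<sigma> = sng (i, js l) 1 + \<nu>"
    by blast
  then have "lk (pm m \<sigma>) (i, js l) \<noteq> 0" by (simp add: lookup_add)
  then show ?thesis using l(1) by (auto simp: lookup_pm split: if_splits)
qed


lemma nth_transpose:
  assumes "distinct rs" "k' < length rs" "l' < length rs" "q < length rs"
  shows "rs ! (transpose k' l' q) = transpose (rs ! k') (rs ! l') (rs ! q)"
  using assms by (auto simp: transpose_def nth_eq_iff_index_eq)

lemma SL:
  fixes f :: "'a::comm_ring_1 mpoly"
  assumes re: "rowexp f m r i js fs" and i: "i < m"
    and key: "pm m \<sigma>0 \<in> ks f" and s0: "\<sigma>0 permutes {..<m}"
  shows "\<exists>R. R \<subseteq> {..<m} - {i} \<and> card R = r \<and>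
    (\<forall>k\<in>R. \<forall>l\<in>R. k \<noteq> l \<longrightarrow> lk f (pm m (\<sigma>0 \<circ> transpose k l)) = - lk f (pm m \<sigma>0)) \<and>
    (\<forall>\<sigma>. lk f (pm m \<sigma>) \<noteq> 0 \<longrightarrow> \<sigma> i = \<sigma>0 i \<longrightarrow> (\<forall>a<m. a \<noteq> i \<longrightarrow> a \<notin> R \<longrightarrow> \<sigma> a = \<sigma>0 a))"
proof -
  obtain l0 where l0: "l0 < r+1" "js l0 = \<sigma>0 i" using key_row_idx[OF re key] by blast
  have "scalar_mono_minor ({..<m} - {i}) ({..<m} - {js l0}) r (fs l0)"
    using re l0(1) by (simp add: rowexp_def)
  then obtain c e R C where smm: "ks e \<subseteq> ({..<m} - {i}) \<times> ({..<m} - {js l0})"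
    "R \<subseteq> {..<m} - {i}" "C \<subseteq> {..<m} - {js l0}" "card R = r" "card C = r"
    "fs l0 = mterm c e * minor_poly R C"
    unfolding scalar_mono_minor_def by blast
  have finR: "finite R" using smm(2) by (rule finite_subset) simp
  have finC: "finite C" using smm(3) by (rule finite_subset) simp
  define rs where "rs = sorted_list_of_set R"
  define cs where "cs = sorted_list_of_set C"
  have rs: "distinct rs" "length rs = r" "set rs = R" using finR smm by (auto simp: rs_def)
  have cs: "distinct cs" "length cs = r" "set cs = C" using finC smm by (auto simp: cs_def)
  have C0: "lk f (pm m \<sigma>) = lk (sng e c * minor_poly R C) (pmx m i \<sigma>)" if "\<sigma> i = \<sigma>0 i" for \<sigma>
    using coef[OF re i l0(1)] that l0(2) smm(6) by (simp add: mterm_def)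
  have "lk f (pm m \<sigma>0) \<noteq> 0" using key by (simp add: in_keys_iff)
  then have "pmx m i \<sigma>0 \<in> ks (sng e c * minor_poly R C)" using C0[of \<sigma>0] by (simp add: in_keys_iff)
  then obtain \<nu> where nu: "\<nu> \<in> ks (minor_poly R C :: 'a mpoly)" "pmx m i \<sigma>0 = e + \<nu>"
    using keys_single_mult by blast
  then obtain p0 where p0: "p0 permutes {..<r}" "\<nu> = mmono rs cs p0 r"
    using keys_minor[OF nu(1)] smm(4) by (auto simp: rs_def cs_def)
  have E: "pmx m i \<sigma>0 = e + mmono rs cs p0 r" using nu p0 by simp
  have Elk: "(if x < m \<and> x \<noteq> i \<and> \<sigma>0 x = y then 1 else 0) = lk e (x, y) + lk (mmono rs cs p0 r) (x, y)" for x y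
    using arg_cong[OF E, of "\<lambda>p. lk p (x, y)"] by (simp add: lookup_pmx lookup_add)
  have Rm: "x < m" "x \<noteq> i" if "x \<in> R" for x using smm(2) that by auto
  have E1: "\<sigma>0 (rs ! q) = cs ! (p0 q) \<and> (\<forall>b. lk e (rs ! q, b) = 0)" if q: "q < r" for q
  proof -
    have inR: "rs ! q \<in> R" using rs q by (metis nth_mem)
    have mm: "lk (mmono rs cs p0 r) (rs ! q, b) = (if cs ! (p0 q) = b then 1 else 0)" for b
      using lookup_mmono_in[OF rs(1) _ q] rs by simp
    have a: "\<sigma>0 (rs ! q) = cs ! (p0 q)"
      using Elk[of "rs ! q" "cs ! (p0 q)"] mm[of "cs ! (p0 q)"] Rm[OF inR]
      by (auto split: if_splits)
    have "lk e (rs ! q, b) = 0" for b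
      using Elk[of "rs ! q" b] mm[of b] Rm[OF inR] a by (auto split: if_splits)
    then show ?thesis using a by blast
  qed
  have E2: "lk e (a, \<sigma>0 a) = 1" if "a < m" "a \<noteq> i" "a \<notin> R" for a
  proof -
    have "a \<notin> (\<lambda>q. rs ! q) ` {..<r}" using that rs by (auto simp: in_set_conv_nth)
    then have "lk (mmono rs cs p0 r) (a, \<sigma>0 a) = 0" by (rule lookup_mmono_out)
    then show ?thesis using Elk[of a "\<sigma>0 a"] that by simp
  qed
  have F2: "\<forall>\<sigma>. lk f (pm m \<sigma>) \<noteq> 0 \<longrightarrow> \<sigma> i = \<sigma>0 i \<longrightarrow> (\<forall>a<m. a \<noteq> i \<longrightarrow> a \<notin> R \<longrightarrow> \<sigma> a = \<sigma>0 a)"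
  proof (intro allI impI)
    fix \<sigma> a assume h: "lk f (pm m \<sigma>) \<noteq> 0" "\<sigma> i = \<sigma>0 i" "a < m" "a \<noteq> i" "a \<notin> R"
    have "pmx m i \<sigma> \<in> ks (sng e c * minor_poly R C)" using h(1) C0[of \<sigma>, OF h(2)] by (simp add: in_keys_iff)
    then obtain \<nu>' where "pmx m i \<sigma> = e + \<nu>'" using keys_single_mult by blast
    then have "lk (pmx m i \<sigma>) (a, \<sigma>0 a) \<noteq> 0" using E2[OF h(3-5)] by (simp add: lookup_add)
    then show "\<sigma> a = \<sigma>0 a" by (simp add: lookup_pmx split: if_splits)
  qed
  have F1: "lk f (pm m (\<sigma>0 \<circ> transpose k l)) = - lk f (pm m \<sigma>0)" if kl: "k \<in> R" "l \<in> R" "k \<noteq> l" for k l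
  proof -
    obtain k' where k': "k' < r" "rs ! k' = k" using kl rs by (metis in_set_conv_nth)
    obtain l' where l': "l' < r" "rs ! l' = l" using kl rs by (metis in_set_conv_nth)
    have kl': "k' \<noteq> l'" using k' l' kl by auto
    define p1 where "p1 = p0 \<circ> transpose k' l'"
    have p1: "p1 permutes {..<r}" unfolding p1_def
      using p0(1) k' l' by (intro permutes_compose permutes_swap_id) auto
    have sp1: "sign p1 = - sign p0"
      unfolding p1_def
      using sign_compose[OF permutes_imp_permutation[OF _ p0(1)] permutation_swap_id] kl'
      by (simp add: sign_swap_id)
    let ?s = "\<sigma>0 \<circ> transpose k l"
    have si: "?s i = \<sigma>0 i" using kl Rm by (auto simp: transpose_def)
    have P: "pmx m i ?s = e + mmono rs cs p1 r"
    proof (rule poly_mapping_eqI)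
      fix v :: "nat \<times> nat"
      obtain x y where v: "v = (x, y)" by fastforce
      show "lk (pmx m i ?s) v = lk (e + mmono rs cs p1 r) v"
      proof (cases "x \<in> R")
        case True
        then obtain q where q: "q < r" "rs ! q = x" using rs by (metis in_set_conv_nth)
        have tq: "transpose k' l' q < r" using q k' l' by (auto simp: transpose_def)
        have rt: "rs ! (transpose k' l' q) = transpose k l x"
          using nth_transpose[of rs k' l' q] rs k' l' q by simp
        have "lk (mmono rs cs p1 r) (x, y) = (if cs ! (p0 (transpose k' l' q)) = y then 1 else 0)"
          using lookup_mmono_in[OF rs(1) _ q(1), of cs p1 y] rs q by (simp add: p1_def)
        also have "cs ! (p0 (transpose k' l' q)) = \<sigma>0 (transpose k l x)"
          using E1[OF tq] rt by simp
        finally show ?thesis using E1[OF q(1)] q Rm[OF True]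
          by (simp add: v lookup_add lookup_pmx)
      next
        case False
        then have tx: "transpose k l x = x" using kl by (auto simp: transpose_def)
        have out: "x \<notin> (\<lambda>q. rs ! q) ` {..<r}" using False rs by (auto simp: in_set_conv_nth)
        show ?thesis using Elk[of x y] lookup_mmono_out[OF out] tx
          by (simp add: v lookup_add lookup_pmx)
      qed
    qed
    have "lk f (pm m ?s) = c * lk (minor_poly R C :: 'a mpoly) (mmono rs cs p1 r)"
      using C0[of "\<sigma>0 \<circ> transpose k l", OF si] P by (simp add: lookup_single_mult)
    also have "\<dots> = c * of_int (sign p1)"
      using lookup_minor_mmono[where 'a='a, OF finR finC _, of p1] smm p1 by (simp add: rs_def cs_def)
    finally have a: "lk f (pm m ?s) = c * of_int (sign p1)" .
    have "lk f (pm m \<sigma>0) = c * lk (minor_poly R C :: 'a mpoly) (mmono rs cs p0 r)"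
      using C0[of \<sigma>0] E by (simp add: lookup_single_mult)
    also have "\<dots> = c * of_int (sign p0)"
      using lookup_minor_mmono[where 'a='a, OF finR finC _, of p0] smm p0 by (simp add: rs_def cs_def)
    finally show ?thesis using a sp1 by simp
  qed
  have F1': "\<forall>k\<in>R. \<forall>l\<in>R. k \<noteq> l \<longrightarrow> lk f (pm m (\<sigma>0 \<circ> transpose k l)) = - lk f (pm m \<sigma>0)"
    using F1 by blast
  show ?thesis
    by (rule exI[of _ R], intro conjI F1' F2 smm(2,4))
qed


lemma comb:
  fixes S :: "(nat \<Rightarrow> nat) \<Rightarrow> bool"
  assumes r3: "r \<ge> 3" and mr: "m \<ge> r + 2"
    and inj: "inj_on \<sigma>0 {..<m}"
    and RfS: "\<And>i. i < m \<Longrightarrow> Rf i \<subseteq> {..<m} - {i}"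
    and RfC: "\<And>i. i < m \<Longrightarrow> card (Rf i) = r"
    and F1: "\<And>i k l. i < m \<Longrightarrow> k \<in> Rf i \<Longrightarrow> l \<in> Rf i \<Longrightarrow> k \<noteq> l \<Longrightarrow> S (\<sigma>0 \<circ> transpose k l)"
    and F2: "\<And>i \<sigma> a. i < m \<Longrightarrow> S \<sigma> \<Longrightarrow> \<sigma> i = \<sigma>0 i \<Longrightarrow> a < m \<Longrightarrow> a \<noteq> i \<Longrightarrow> a \<notin> Rf i \<Longrightarrow> \<sigma> a = \<sigma>0 a"
  shows False
proof -
  have sw: "(\<sigma>0 \<circ> transpose k l) k \<noteq> \<sigma>0 k" if "k < m" "l < m" "k \<noteq> l" for k l
  proof -
    have "\<sigma>0 l \<noteq> \<sigma>0 k" using inj_onD[OF inj, of l k] that by auto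
    then show ?thesis by simp
  qed
  have sw2: "(\<sigma>0 \<circ> transpose k l) x = \<sigma>0 x" if "x \<noteq> k" "x \<noteq> l" for k l x
    using that by (simp add: transpose_def)
  define R where "R = Rf 0"
  have m0: "0 < m" using mr by simp
  have R: "R \<subseteq> {..<m}" "card R = r" using RfS[OF m0] RfC[OF m0] by (auto simp: R_def)
  have finR: "finite R" using R finite_subset by blast
  define P where "P i = {..<m} - {i} - Rf i" for i
  have big: "\<exists>y\<in>R. y \<noteq> x \<and> y \<noteq> i" for x i
  proof -
    have "card (R - {x, i}) \<ge> card R - card {x, i}" by (rule diff_card_le_card_Diff) simp
    moreover have "card {x, i} \<le> 2" by (simp add: card_insert_le_m1)
    ultimately have "card (R - {x, i}) > 0" using R r3 by linarith
    then have "R - {x, i} \<noteq> {}" by (auto simp: card_gt_0_iff)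
    then obtain y where "y \<in> R - {x, i}" by blast
    then show ?thesis by auto
  qed
  have claim1: "x \<in> Rf i" if xi: "i < m" "x \<in> R" "x \<noteq> i" for i x
  proof (rule ccontr)
    assume nx: "x \<notin> Rf i"
    obtain y where y: "y \<in> R" "y \<noteq> x" "y \<noteq> i" using big by blast
    have S: "S (\<sigma>0 \<circ> transpose x y)"
      using F1[OF m0, of x y] xi(2) y(1,2) by (simp add: R_def)
    have xm: "x < m" "y < m" using R xi y by auto
    have "(\<sigma>0 \<circ> transpose x y) i = \<sigma>0 i" using sw2 xi y by simp
    then have "(\<sigma>0 \<circ> transpose x y) x = \<sigma>0 x"
      using F2[OF xi(1) S _ xm(1) xi(3) nx] by simp
    then show False using sw[OF xm y(2)[symmetric]] by simp
  qed
  define T where "T = {..<m} - R"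
  have cardT: "card T = m - r" using R by (simp add: T_def card_Diff_subset finR)
  have PT: "P i \<subseteq> T" if "i < m" for i
    using claim1[OF that] by (auto simp: P_def T_def)
  have cardP: "card (P i) = m - 1 - r" if "i < m" for i
  proof -
    have "Rf i \<subseteq> {..<m} - {i}" "card (Rf i) = r" using RfS RfC that by auto
    moreover have "card ({..<m} - {i}) = m - 1" using that by simp
    ultimately show ?thesis unfolding P_def
      by (metis card_Diff_subset finite_Diff finite_lessThan finite_subset)
  qed
  have "R \<noteq> {}" using R r3 by auto
  then obtain i where i: "i \<in> R" by blast
  have im: "i < m" using i R by auto
  have "\<not> T \<subseteq> P i"
  proof
    assume "T \<subseteq> P i"
    then have "card T \<le> card (P i)" by (rule card_mono[rotated]) (simp add: P_def)
    then show False using cardT cardP[OF im] mr by linarith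
  qed
  then obtain t where t: "t \<in> T" "t \<notin> P i" by blast
  have tm: "t < m" "t \<notin> R" using t by (auto simp: T_def)
  have ti: "t \<noteq> i" using tm i by auto
  have tRi: "t \<in> Rf i" using t tm ti by (auto simp: P_def)
  obtain k where k: "k \<in> R" "k \<noteq> i" using big by blast
  have kRi: "k \<in> Rf i" using claim1[OF im k(1) k(2)] .
  have kt: "k \<noteq> t" using k tm by auto
  have km: "k < m" using k R by auto
  have S: "S (\<sigma>0 \<circ> transpose t k)" using F1[OF im tRi kRi] kt by simp
  have finT: "finite T" by (simp add: T_def)
  have "card (T - {t}) = card T - 1" using t(1) finT by (simp add: card_Diff_singleton)
  then have "card (T - {t}) > 0" using cardT mr by linarith
  then have "T - {t} \<noteq> {}" by (metis card.empty less_irrefl)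
  then obtain i' where i': "i' \<in> T" "i' \<noteq> t" by blast
  have i'm: "i' < m" "i' \<notin> R" using i' by (auto simp: T_def)
  have "P i' = T - {i'}"
  proof (rule card_subset_eq)
    show "finite (T - {i'})" by (simp add: T_def)
    show "P i' \<subseteq> T - {i'}" using PT[OF i'm(1)] by (auto simp: P_def)
    show "card (P i') = card (T - {i'})" using cardP[OF i'm(1)] cardT i' by simp
  qed
  then have tP: "t \<in> P i'" using t i' by auto
  have ik: "i' \<noteq> k" using i'm k by auto
  have "(\<sigma>0 \<circ> transpose t k) i' = \<sigma>0 i'" using sw2[of i' t k] i'(2) ik by simp
  moreover have "t \<noteq> i'" "t \<notin> Rf i'" using tP by (auto simp: P_def)
  ultimately have "(\<sigma>0 \<circ> transpose t k) t = \<sigma>0 t"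
    using F2[OF i'm(1) S _ tm(1)] by simp
  then show False using sw[OF tm(1) km kt[symmetric]] by simp
qed

theorem lemma3p5:
  fixes f :: "'a::alg_closed_field mpoly" and m r :: nat
  assumes "r \<ge> 3" and "m \<ge> 1" and "f \<noteq> 0"
    and "mvars f \<subseteq> {..<m} \<times> {..<m}"
    and "\<And>A :: 'a mat. A \<in> carrier_mat m m \<Longrightarrow> vec_space.rank m A = r \<Longrightarrow>
           eval_mpoly f (\<lambda>i j. A $$ (i, j)) = 0"
    and "\<forall>i<m. \<exists>js :: nat \<Rightarrow> nat. \<exists>fs :: nat \<Rightarrow> 'a mpoly.
           strict_mono_on {..<r+1} js \<and> js ` {..<r+1} \<subseteq> {..<m} \<and>
           f = (\<Sum>l<r+1. Var i (js l) * fs l) \<and>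
           (\<forall>l<r+1. scalar_mono_minor ({..<m} - {i}) ({..<m} - {js l}) r (fs l))"
    and "\<forall>j<m. \<exists>is :: nat \<Rightarrow> nat. \<exists>gs :: nat \<Rightarrow> 'a mpoly.
           strict_mono_on {..<r+1} is \<and> is ` {..<r+1} \<subseteq> {..<m} \<and>
           f = (\<Sum>l<r+1. Var (is l) j * gs l) \<and>
           (\<forall>l<r+1. scalar_mono_minor ({..<m} - {is l}) ({..<m} - {j}) r (gs l))"
  shows "m = r + 1 \<and> (\<exists>c. f = const_mpoly c * minor_poly {..<m} {..<m})"
proof -
  have rows: "\<forall>i<m. \<exists>js fs. rowexp f m r i js fs" using assms(6) by (simp add: rowexp_def)
  have cols: "\<forall>j<m. \<exists>is gs. colexp f m r j is gs" using assms(7) by (simp add: colexp_def)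
  obtain js0 fs0 where re0: "rowexp f m r 0 js0 fs0" using rows assms(2) by auto
  have img: "js0 ` {..<r+1} \<subseteq> {..<m}" using re0 unfolding rowexp_def by (elim conjE)
  have "card {..<r+1} \<le> card {..<m}"
    by (rule card_inj_on_le[OF rowexp_inj[OF re0] img finite_lessThan])
  then have mr: "r + 1 \<le> m" by simp
  obtain \<mu>0 where "\<mu>0 \<in> ks f" using assms(3) by (metis ex_in_conv keys_eq_empty)
  then obtain \<sigma>0 where s0: "\<sigma>0 permutes {..<m}" "pm m \<sigma>0 \<in> ks f"
    using key_pm[OF rows cols assms(4)] by blast
  have SLg: "\<exists>R. R \<subseteq> {..<m} - {i} \<and> card R = r \<and>
    (\<forall>k\<in>R. \<forall>l\<in>R. k \<noteq> l \<longrightarrow> lk f (pm m (\<sigma> \<circ> transpose k l)) = - lk f (pm m \<sigma>)) \<and>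
    (\<forall>\<sigma>'. lk f (pm m \<sigma>') \<noteq> 0 \<longrightarrow> \<sigma>' i = \<sigma> i \<longrightarrow> (\<forall>a<m. a \<noteq> i \<longrightarrow> a \<notin> R \<longrightarrow> \<sigma>' a = \<sigma> a))"
    if hyp: "i < m" "pm m \<sigma> \<in> ks f" "\<sigma> permutes {..<m}" for i \<sigma>
  proof -
    obtain js fs where "rowexp f m r i js fs" using rows hyp(1) by blast
    from SL[OF this hyp(1) hyp(2,3)] show ?thesis .
  qed
  show ?thesis
  proof (cases "m = r + 1")
    case False
    then have mr2: "m \<ge> r + 2" using mr by simp
    have "\<forall>i. \<exists>R. i < m \<longrightarrow> R \<subseteq> {..<m} - {i} \<and> card R = r \<and>
      (\<forall>k\<in>R. \<forall>l\<in>R. k \<noteq> l \<longrightarrow> lk f (pm m (\<sigma>0 \<circ> transpose k l)) = - lk f (pm m \<sigma>0)) \<and>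
      (\<forall>\<sigma>'. lk f (pm m \<sigma>') \<noteq> 0 \<longrightarrow> \<sigma>' i = \<sigma>0 i \<longrightarrow> (\<forall>a<m. a \<noteq> i \<longrightarrow> a \<notin> R \<longrightarrow> \<sigma>' a = \<sigma>0 a))"
    proof
      fix i
      show "\<exists>R. i < m \<longrightarrow> R \<subseteq> {..<m} - {i} \<and> card R = r \<and>
      (\<forall>k\<in>R. \<forall>l\<in>R. k \<noteq> l \<longrightarrow> lk f (pm m (\<sigma>0 \<circ> transpose k l)) = - lk f (pm m \<sigma>0)) \<and>
      (\<forall>\<sigma>'. lk f (pm m \<sigma>') \<noteq> 0 \<longrightarrow> \<sigma>' i = \<sigma>0 i \<longrightarrow> (\<forall>a<m. a \<noteq> i \<longrightarrow> a \<notin> R \<longrightarrow> \<sigma>' a = \<sigma>0 a))"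
      proof (cases "i < m")
        case True
        from SLg[OF True s0(2,1)] obtain R where H: "R \<subseteq> {..<m} - {i} \<and> card R = r \<and>
      (\<forall>k\<in>R. \<forall>l\<in>R. k \<noteq> l \<longrightarrow> lk f (pm m (\<sigma>0 \<circ> transpose k l)) = - lk f (pm m \<sigma>0)) \<and>
      (\<forall>\<sigma>'. lk f (pm m \<sigma>') \<noteq> 0 \<longrightarrow> \<sigma>' i = \<sigma>0 i \<longrightarrow> (\<forall>a<m. a \<noteq> i \<longrightarrow> a \<notin> R \<longrightarrow> \<sigma>' a = \<sigma>0 a))"
          by (elim exE)
        show ?thesis by (rule exI[of _ R], rule impI, rule H)
      qed simp
    qed
    then obtain Rf where Rf0: "\<forall>i. i < m \<longrightarrow> Rf i \<subseteq> {..<m} - {i} \<and> card (Rf i) = r \<and>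
      (\<forall>k\<in>Rf i. \<forall>l\<in>Rf i. k \<noteq> l \<longrightarrow> lk f (pm m (\<sigma>0 \<circ> transpose k l)) = - lk f (pm m \<sigma>0)) \<and>
      (\<forall>\<sigma>'. lk f (pm m \<sigma>') \<noteq> 0 \<longrightarrow> \<sigma>' i = \<sigma>0 i \<longrightarrow> (\<forall>a<m. a \<noteq> i \<longrightarrow> a \<notin> Rf i \<longrightarrow> \<sigma>' a = \<sigma>0 a))"
      by (rule exE[OF choice])
    note Rf = Rf0[rule_format]
    have nz: "lk f (pm m \<sigma>0) \<noteq> 0" using s0 by (simp add: in_keys_iff)
    have inj: "inj_on \<sigma>0 {..<m}" using s0(1) by (meson permutes_inj_on)
    have False
    proof (rule comb[of r m \<sigma>0 Rf "\<lambda>\<sigma>. lk f (pm m \<sigma>) \<noteq> 0", OF assms(1) mr2 inj])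
      fix i assume i: "i < m"
      note Ri = Rf[OF i]
      show "Rf i \<subseteq> {..<m} - {i}" using Ri by (rule conjunct1)
      show "card (Rf i) = r" using Ri by (elim conjE)
    next
      fix i k l assume h: "i < m" "k \<in> Rf i" "l \<in> Rf i" "k \<noteq> l"
      have "\<forall>k\<in>Rf i. \<forall>l\<in>Rf i. k \<noteq> l \<longrightarrow> lk f (pm m (\<sigma>0 \<circ> transpose k l)) = - lk f (pm m \<sigma>0)"
        using Rf[OF h(1)] by (elim conjE)
      then have "lk f (pm m (\<sigma>0 \<circ> transpose k l)) = - lk f (pm m \<sigma>0)" using h(2-4) by blast
      then show "lk f (pm m (\<sigma>0 \<circ> transpose k l)) \<noteq> 0" using nz by simp
    next
      fix i \<sigma> a assume h: "i < m" "lk f (pm m \<sigma>) \<noteq> 0" "\<sigma> i = \<sigma>0 i" "a < m" "a \<noteq> i" "a \<notin> Rf i"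
      have "\<forall>\<sigma>'. lk f (pm m \<sigma>') \<noteq> 0 \<longrightarrow> \<sigma>' i = \<sigma>0 i \<longrightarrow> (\<forall>a<m. a \<noteq> i \<longrightarrow> a \<notin> Rf i \<longrightarrow> \<sigma>' a = \<sigma>0 a)"
        using Rf[OF h(1)] by (elim conjE)
      then show "\<sigma> a = \<sigma>0 a" using h(2-6) by blast
    qed
    then show ?thesis ..
  next
    case True
    define a where "a \<sigma> = lk f (pm m \<sigma>)" for \<sigma>
    have swp: "a (\<sigma> \<circ> transpose k l) = - a \<sigma>"
      if s: "\<sigma> permutes {..<m}" and kl: "k < m" "l < m" "k \<noteq> l" for \<sigma> k l
    proof -
      have ex: "\<exists>i<m. i \<noteq> k \<and> i \<noteq> l"
      proof -
        have "card ({..<m} - {k, l}) \<ge> card {..<m} - card {k, l}" by (rule diff_card_le_card_Diff) simp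
        moreover have "card {k, l} \<le> 2" by (simp add: card_insert_le_m1)
        ultimately have "card ({..<m} - {k, l}) > 0" using True assms(1) by simp
        then show ?thesis by (metis card_gt_0_iff ex_in_conv DiffE insertCI lessThan_iff)
      qed
      then obtain i where i: "i < m" "i \<noteq> k" "i \<noteq> l" by blast
      have main: "a (\<rho> \<circ> transpose k l) = - a \<rho>" if rh: "\<rho> permutes {..<m}" "a \<rho> \<noteq> 0" for \<rho>
      proof -
        have key: "pm m \<rho> \<in> ks f" using rh by (simp add: a_def in_keys_iff)
        obtain R where R: "R \<subseteq> {..<m} - {i}" "card R = r"
          "\<forall>k\<in>R. \<forall>l\<in>R. k \<noteq> l \<longrightarrow> lk f (pm m (\<rho> \<circ> transpose k l)) = - lk f (pm m \<rho>)"
          using SLg[OF i(1) key rh(1)] by blast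
        have "R = {..<m} - {i}"
          using R(1,2) True i(1) by (intro card_subset_eq) auto
        then show ?thesis using R(3) kl i by (auto simp: a_def)
      qed
      show ?thesis
      proof (cases "a \<sigma> = 0")
        case False
        then show ?thesis using main s by blast
      next
        case z: True
        show ?thesis
        proof (rule ccontr)
          assume "a (\<sigma> \<circ> transpose k l) \<noteq> - a \<sigma>"
          then have nz: "a (\<sigma> \<circ> transpose k l) \<noteq> 0" using z by simp
          have p: "\<sigma> \<circ> transpose k l permutes {..<m}"
            using s kl by (intro permutes_compose permutes_swap_id) auto
          have "a (\<sigma> \<circ> transpose k l \<circ> transpose k l) = - a (\<sigma> \<circ> transpose k l)"
            using main[OF p nz] .
          moreover have "\<sigma> \<circ> transpose k l \<circ> transpose k l = \<sigma>"
            by (simp add: comp_assoc)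
          ultimately show False using z nz by simp
        qed
      qed
    qed
    have ind: "\<forall>\<sigma>. \<sigma> permutes {..<m} \<longrightarrow> a (\<sigma> \<circ> p) = of_int (sign p) * a \<sigma>"
      if p: "p permutes {..<m}" for p
      using p finite_lessThan
    proof (induction p rule: permutes_induct)
      case id
      then show ?case by (simp add: sign_id)
    next
      case (swap x y p)
      show ?case
      proof (intro allI impI)
        fix \<sigma> assume s: "\<sigma> permutes {..<m}"
        have s': "\<sigma> \<circ> transpose x y permutes {..<m}"
          using s swap by (intro permutes_compose permutes_swap_id) auto
        have "a (\<sigma> \<circ> (transpose x y \<circ> p)) = a ((\<sigma> \<circ> transpose x y) \<circ> p)" by (simp add: comp_assoc)
        also have "\<dots> = of_int (sign p) * a (\<sigma> \<circ> transpose x y)" using swap.IH s' by blast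
        also have "\<dots> = - (of_int (sign p) * a \<sigma>)" using swp[OF s, of x y] swap.hyps by simp
        also have "sign (transpose x y \<circ> p) = - sign p"
          using sign_compose[OF permutation_swap_id permutes_imp_permutation[OF _ swap(4)]] swap
          by (simp add: sign_swap_id)
        ultimately show "a (\<sigma> \<circ> (transpose x y \<circ> p)) = of_int (sign (transpose x y \<circ> p)) * a \<sigma>"
          by simp
      qed
    qed
    define d where "d = of_int (sign \<sigma>0) * a \<sigma>0"
    have aform: "a \<sigma> = of_int (sign \<sigma>) * d" if s: "\<sigma> permutes {..<m}" for \<sigma>
    proof -
      have pi: "inv_into UNIV \<sigma>0 \<circ> \<sigma> permutes {..<m}"
        using s s0 by (intro permutes_compose permutes_inv) auto
      have "\<sigma>0 \<circ> (inv_into UNIV \<sigma>0 \<circ> \<sigma>) = \<sigma>"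
        using permutes_inv_o(1)[OF s0(1)] by (simp add: comp_assoc[symmetric])
      then have "a \<sigma> = of_int (sign (inv_into UNIV \<sigma>0 \<circ> \<sigma>)) * a \<sigma>0"
        using ind[OF pi] s0 by metis
      also have "sign (inv_into UNIV \<sigma>0 \<circ> \<sigma>) = sign \<sigma>0 * sign \<sigma>"
        using sign_compose[OF permutation_inverse[OF permutes_imp_permutation[OF _ s0(1)]]
            permutes_imp_permutation[OF _ s]]
          sign_inverse[OF permutes_imp_permutation[OF _ s0(1)]] by simp
      finally show ?thesis by (simp add: d_def)
    qed
    have upt: "sorted_list_of_set {..<m} = [0..<m]" by (simp add: lessThan_atLeast0)
    have mm: "mmono [0..<m] [0..<m] p m = pm m p" if pp: "p permutes {..<m}" for p
      unfolding mmono_def pm_def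
    proof (rule sum.cong[OF refl])
      fix l assume "l \<in> {..<m}"
      then have "p l < m" using permutes_in_image[OF pp, of l] by simp
      then show "sng ([0..<m] ! l, [0..<m] ! p l) 1 = sng (l, p l) 1" using \<open>l \<in> {..<m}\<close> by simp
    qed
    have "f = const_mpoly d * minor_poly {..<m} {..<m}"
    proof (rule poly_mapping_eqI)
      fix \<mu>
      have rhs: "lk (const_mpoly d * minor_poly {..<m} {..<m}) \<mu> = d * lk (minor_poly {..<m} {..<m} :: 'a mpoly) \<mu>"
        using lookup_single_mult[of 0 d "minor_poly {..<m} {..<m} :: 'a mpoly" \<mu>]
        by (simp add: const_mpoly_def)
      show "lk f \<mu> = lk (const_mpoly d * minor_poly {..<m} {..<m}) \<mu>"
      proof (cases "\<exists>p. p permutes {..<m} \<and> \<mu> = pm m p")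
        case True
        then obtain p where p: "p permutes {..<m}" "\<mu> = pm m p" by blast
        have "lk (minor_poly {..<m} {..<m} :: 'a mpoly) \<mu> = of_int (sign p)"
          using lookup_minor_mmono[where 'a='a, of "{..<m}" "{..<m}" p] p by (simp add: upt mm[OF p(1)])
        then show ?thesis using rhs aform[OF p(1)] p by (simp add: a_def)
      next
        case False
        then have "\<mu> \<notin> ks f" using key_pm[OF rows cols assms(4)] by blast
        then have l: "lk f \<mu> = 0" by (simp add: in_keys_iff)
        have "lk (minor_poly {..<m} {..<m} :: 'a mpoly) \<mu> = 0"
          unfolding lookup_minor upt card_lessThan
        proof (rule sum.neutral, intro ballI)
          fix q assume "q \<in> {q. q permutes {..<m}}"
          then have q: "q permutes {..<m}" by simp
          then have "\<mu> \<noteq> mmono [0..<m] [0..<m] q m" using False mm[OF q] by auto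
          then show "((of_int (sign q) :: 'a) when \<mu> = mmono [0..<m] [0..<m] q m) = 0" by simp
        qed
        then show ?thesis using l rhs by simp
      qed
    qed
    then show ?thesis using True by blast
  qed
qed

end
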